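(* Let $(X,Y)\sim P_{X,Y}$ be random variables in $\{0,1\}\times\mathcal{Y}$, $\mathcal{Y}=\{1,\dots,|\mathcal{Y}|\}$ with $|\mathcal{Y}|\ge 2$. For $i\neq j\in\mathcal{Y}$ let $f_{ij}$ be the map sending $i$ and $j$ to a common new symbol $y'\notin\mathcal{Y}$ and fixing every other symbol. Then there exist $i\neq j\in\mathcal{Y}$ such that \[ I(X;Y)-I(X;f_{ij}(Y))\leq\frac{128}{|\mathcal{Y}|^3}. \]
   Context: Logarithms (and mutual informations) are natural. *)

theory Defs
  imports "HOL-Probability.Probability_Mass_Function"
begin

text \<open>Mutual information (natural logarithm) of the two coordinates of a finitely
supported joint distribution, with the convention 0 ln 0 = 0 (sum over the support).\<close>
definition mutual_info :: "('a \<times> 'b) pmf \<Rightarrow> real" where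
  "mutual_info P =
     (\<Sum>xy\<in>set_pmf P. pmf P xy *
        ln (pmf P xy / (pmf (map_pmf fst P) (fst xy) * pmf (map_pmf snd P) (snd xy))))"

text \<open>The merging map f_ij on the alphabet {1..n}: i and j are sent to the new
symbol 0 (not in {1..n}), every other symbol is fixed.\<close>
definition merge_sym :: "nat \<Rightarrow> nat \<Rightarrow> nat \<Rightarrow> nat" where
  "merge_sym i j y = (if y = i \<or> y = j then 0 else y)"

end

theory Submission
  imports Defs
begin


lemma pmf_map_fin:
  assumes "set_pmf P \<subseteq> S" "finite S"
  shows "pmf (map_pmf f P) z = (\<Sum>w\<in>{w\<in>S. f w = z}. pmf P w)"
proof -
  have "pmf (map_pmf f P) z = measure P (f -` {z})" by (rule pmf_map)
  also have "\<dots> = measure P ({w\<in>S. f w = z})"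
  proof (rule measure_pmf.finite_measure_eq_AE)
    show "AE x in measure_pmf P. (x \<in> f -` {z}) = (x \<in> {w \<in> S. f w = z})"
      using assms(1) by (auto simp: AE_measure_pmf_iff)
  qed auto
  also have "\<dots> = (\<Sum>w\<in>{w\<in>S. f w = z}. pmf P w)"
    using assms(2) by (simp add: measure_measure_pmf_finite)
  finally show ?thesis .
qed

lemma mi_expand:
  fixes P :: "(nat \<times> 'b) pmf"
  assumes sub: "set_pmf P \<subseteq> {0,1} \<times> Y" and fin: "finite Y"
  shows "mutual_info P = (\<Sum>y\<in>Y. \<Sum>x\<in>{0,1}. pmf P (x,y) *
     ln (pmf P (x,y) / (pmf (map_pmf fst P) x * (pmf P (0,y) + pmf P (1,y)))))"
proof -
  have snd_eq: "pmf (map_pmf snd P) y = pmf P (0,y) + pmf P (1,y)" if "y \<in> Y" for y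
  proof -
    have "pmf (map_pmf snd P) y = (\<Sum>w\<in>{w\<in>{0,1} \<times> Y. snd w = y}. pmf P w)"
      by (rule pmf_map_fin[OF sub]) (use fin in auto)
    also have "{w\<in>{0,1} \<times> Y. snd w = y} = {(0,y),(1,y)}" using that by auto
    finally show ?thesis by simp
  qed
  have "mutual_info P = (\<Sum>xy\<in>{0,1} \<times> Y. pmf P xy *
        ln (pmf P xy / (pmf (map_pmf fst P) (fst xy) * pmf (map_pmf snd P) (snd xy))))"
    unfolding mutual_info_def
    by (rule sum.mono_neutral_left) (use sub fin in \<open>auto simp: set_pmf_iff\<close>)
  also have "\<dots> = (\<Sum>xy\<in>{0,1} \<times> Y. pmf P xy *
        ln (pmf P xy / (pmf (map_pmf fst P) (fst xy) * (pmf P (0,snd xy) + pmf P (1,snd xy)))))"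
    by (rule sum.cong) (auto simp: snd_eq)
  also have "\<dots> = (\<Sum>x\<in>{0,1}. \<Sum>y\<in>Y. pmf P (x,y) *
     ln (pmf P (x,y) / (pmf (map_pmf fst P) x * (pmf P (0,y) + pmf P (1,y)))))"
    by (subst sum.cartesian_product) (simp add: case_prod_beta)
  also have "\<dots> = (\<Sum>y\<in>Y. \<Sum>x\<in>{0,1}. pmf P (x,y) *
     ln (pmf P (x,y) / (pmf (map_pmf fst P) x * (pmf P (0,y) + pmf P (1,y)))))"
    by (rule sum.swap)
  finally show ?thesis .
qed



lemma kl_step:
  fixes a A S r c :: real
  assumes "a \<ge> 0" "A \<ge> 0" "S > 0" "r > 0" "c > 0" "A > 0 \<Longrightarrow> a > 0"
  shows "A * ln (A / (r * a)) - A * ln (S / (r * c)) \<le> A * (A * c / (a * S) - 1)"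
proof (cases "A = 0")
  case True then show ?thesis by simp
next
  case False
  then have A: "A > 0" using assms by simp
  then have a: "a > 0" using assms by simp
  have "ln (A / (r * a)) - ln (S / (r * c)) = ln ((A / (r * a)) / (S / (r * c)))"
    using A a assms by (simp add: ln_div ln_mult)
  also have "(A / (r * a)) / (S / (r * c)) = A * c / (a * S)"
    using A a assms by (simp add: field_simps)
  finally have e: "ln (A / (r * a)) - ln (S / (r * c)) = ln (A * c / (a * S))" .
  have "ln (A * c / (a * S)) \<le> A * c / (a * S) - 1"
    by (rule ln_le_minus_one) (use A a assms in simp)
  then have "A * (ln (A / (r * a)) - ln (S / (r * c))) \<le> A * (A * c / (a * S) - 1)"
    using e A by (simp add: mult_left_mono)
  then show ?thesis by (simp add: algebra_simps)
qed

lemma alg_step: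
  fixes a b x y :: real
  assumes "a \<ge> 0" "b \<ge> 0" "x \<ge> 0" "y \<ge> 0" "0 < a*x^2 + b*y^2"
  shows "(a*x^2) * ((a*x^2) * (a+b) / (a * (a*x^2 + b*y^2)) - 1)
       + (b*y^2) * ((b*y^2) * (a+b) / (b * (a*x^2 + b*y^2)) - 1)
       \<le> 2 * max a b * (x - y)^2"
proof -
  let ?D = "a*x^2 + b*y^2"
  have D0: "?D \<noteq> 0" using assms(5) by simp
  have e1: "(a*x^2) * ((a*x^2) * (a+b) / (a * ?D)) = a*x^4*(a+b)/?D"
    proof (cases "a = 0")
    case False
    have "(a*x^2) * ((a*x^2) * (a+b) / (a * ?D)) = a * (a*x^4*(a+b)) / (a * ?D)"
      by (simp add: power2_eq_square power4_eq_xxxx algebra_simps)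
    also have "\<dots> = a*x^4*(a+b) / ?D" using False by simp
    finally show ?thesis .
  qed simp
  have e2: "(b*y^2) * ((b*y^2) * (a+b) / (b * ?D)) = b*y^4*(a+b)/?D"
    proof (cases "b = 0")
    case False
    have "(b*y^2) * ((b*y^2) * (a+b) / (b * ?D)) = b * (b*y^4*(a+b)) / (b * ?D)"
      by (simp add: power2_eq_square power4_eq_xxxx algebra_simps)
    also have "\<dots> = b*y^4*(a+b) / ?D" using False by simp
    finally show ?thesis .
  qed simp
  have n: "(a+b)*(a*x^4+b*y^4) - ?D^2 = a*b*(x-y)^2*(x+y)^2"
    unfolding power2_eq_square power4_eq_xxxx by algebra
  have "a*x^4*(a+b)/?D - a*x^2 + (b*y^4*(a+b)/?D - b*y^2) = ((a+b)*(a*x^4+b*y^4) - ?D^2)/?D"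
  proof -
    have g: "\<And>X Y p q D::real. D \<noteq> 0 \<Longrightarrow> X/D - p + (Y/D - q) = (X + Y - (p+q)*D)/D"
      by (simp add: field_simps)
    have "(a+b)*(a*x^4+b*y^4) - ?D^2 = a*x^4*(a+b) + b*y^4*(a+b) - (a*x^2+b*y^2)*?D"
      by (simp add: power2_eq_square algebra_simps)
    then show ?thesis using g[OF D0, of "a*x^4*(a+b)" "a*x^2" "b*y^4*(a+b)" "b*y^2"] by (simp only:)
  qed
  then have lhs: "(a*x^2) * ((a*x^2) * (a+b) / (a * ?D) - 1)
       + (b*y^2) * ((b*y^2) * (a+b) / (b * ?D) - 1) = a*b*(x-y)^2*(x+y)^2 / ?D"
    unfolding right_diff_distrib e1 e2 n by simp
  have k1: "a*b*(x+y)^2 \<le> 2*(a*b)*(x^2+y^2)"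
  proof -
    have "2*(x^2+y^2) - (x+y)^2 = (x-y)^2" by (simp add: power2_eq_square algebra_simps)
    then have "(x+y)^2 \<le> 2*(x^2+y^2)" using zero_le_power2[of "x-y"] by linarith
    then have "(a*b)*(x+y)^2 \<le> (a*b)*(2*(x^2+y^2))" by (rule mult_left_mono) (use assms in auto)
    then show ?thesis by (simp add: mult_ac)
  qed
  have k2: "2*(a*b)*(x^2+y^2) \<le> 2*max a b * ?D"
  proof -
    have "(a*x^2)*b \<le> (a*x^2)*max a b" by (rule mult_left_mono) (use assms in auto)
    moreover have "(b*y^2)*a \<le> (b*y^2)*max a b" by (rule mult_left_mono) (use assms in auto)
    ultimately show ?thesis by (simp add: algebra_simps)
  qed
  have "(a*b*(x+y)^2)*(x-y)^2 \<le> (2*max a b * ?D)*(x-y)^2"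
    by (rule mult_right_mono) (use k1 k2 in auto)
  then have "a*b*(x-y)^2*(x+y)^2 \<le> 2*max a b * ?D * (x-y)^2" by (simp add: mult_ac)
  then have "a*b*(x-y)^2*(x+y)^2 / ?D \<le> 2*max a b * (x-y)^2"
    using assms(5) by (simp add: divide_le_eq mult.commute mult.left_commute)
  then show ?thesis using lhs by simp
qed



lemma core:
  fixes a b p q r :: real
  assumes "a \<ge> 0" "b \<ge> 0" "0 \<le> p" "p \<le> 1" "0 \<le> q" "q \<le> 1" "r \<ge> a*p + b*q"
  shows "(a*p) * ln ((a*p) / (r*a)) + (b*q) * ln ((b*q) / (r*b))
         - (a*p + b*q) * ln ((a*p + b*q) / (r*(a+b))) \<le> 2 * max a b * (sqrt p - sqrt q)^2"
proof (cases "a*p + b*q = 0")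
  case True
  have "a*p \<ge> 0" "b*q \<ge> 0" using assms by auto
  then have z: "a*p = 0" "b*q = 0" using True by linarith+
  have "0 \<le> max a b * (sqrt p - sqrt q)^2" using assms by (simp add: max_def)
  then show ?thesis unfolding z by simp
next
  case False
  have As: "a*p \<ge> 0" "b*q \<ge> 0" using assms by auto
  then have S: "a*p + b*q > 0" using False by linarith
  then have r: "r > 0" using assms by linarith
  have c: "a + b > 0"
  proof (rule ccontr)
    assume "\<not> a + b > 0" then have "a = 0" "b = 0" using assms by auto
    then show False using S by simp
  qed
  have k1: "(a*p) * ln ((a*p) / (r*a)) - (a*p) * ln ((a*p + b*q) / (r*(a+b)))
      \<le> (a*p) * ((a*p) * (a+b) / (a * (a*p + b*q)) - 1)"
    by (rule kl_step) (use As S r c assms in \<open>auto simp: zero_less_mult_iff\<close>)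
  have k2: "(b*q) * ln ((b*q) / (r*b)) - (b*q) * ln ((a*p + b*q) / (r*(a+b)))
      \<le> (b*q) * ((b*q) * (a+b) / (b * (a*p + b*q)) - 1)"
    by (rule kl_step) (use As S r c assms in \<open>auto simp: zero_less_mult_iff\<close>)
  have ss: "p = (sqrt p)^2" "q = (sqrt q)^2" using assms by simp_all
  have al: "(a*(sqrt p)^2) * ((a*(sqrt p)^2) * (a+b) / (a * (a*(sqrt p)^2 + b*(sqrt q)^2)) - 1)
       + (b*(sqrt q)^2) * ((b*(sqrt q)^2) * (a+b) / (b * (a*(sqrt p)^2 + b*(sqrt q)^2)) - 1)
       \<le> 2 * max a b * (sqrt p - sqrt q)^2"
    by (rule alg_step) (use assms S ss in auto)
  have "(a*p) * ln ((a*p) / (r*a)) + (b*q) * ln ((b*q) / (r*b))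
         - (a*p + b*q) * ln ((a*p + b*q) / (r*(a+b)))
      = ((a*p) * ln ((a*p) / (r*a)) - (a*p) * ln ((a*p + b*q) / (r*(a+b))))
      + ((b*q) * ln ((b*q) / (r*b)) - (b*q) * ln ((a*p + b*q) / (r*(a+b))))"
    by (simp add: algebra_simps)
  also have "\<dots> \<le> (a*p) * ((a*p) * (a+b) / (a * (a*p + b*q)) - 1)
      + (b*q) * ((b*q) * (a+b) / (b * (a*p + b*q)) - 1)" using k1 k2 by linarith
  also have "\<dots> \<le> 2 * max a b * (sqrt p - sqrt q)^2" using al ss by simp
  finally show ?thesis .
qed

lemma dist_bound:
  fixes p q :: real
  assumes "0 \<le> p" "p \<le> 1" "0 \<le> q" "q \<le> 1"
  shows "(sqrt p - sqrt q)^2 + (sqrt (1-p) - sqrt (1-q))^2 \<le> 2"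
    and "(sqrt p - sqrt q)^2 + (sqrt (1-p) - sqrt (1-q))^2
         \<le> ((sqrt p - sqrt (1-p)) - (sqrt q - sqrt (1-q)))^2"
proof -
  have e: "(sqrt p - sqrt q)^2 + (sqrt (1-p) - sqrt (1-q))^2
      = 2 - 2 * (sqrt p * sqrt q) - 2 * (sqrt (1-p) * sqrt (1-q))"
    using assms by (simp add: power2_diff)
  show "(sqrt p - sqrt q)^2 + (sqrt (1-p) - sqrt (1-q))^2 \<le> 2"
  proof -
    have "sqrt p * sqrt q \<ge> 0" "sqrt (1-p) * sqrt (1-q) \<ge> 0" using assms by auto
    then show ?thesis unfolding e by linarith
  qed
  have "(sqrt p - sqrt q) * (sqrt (1-q) - sqrt (1-p)) \<ge> 0"
  proof (cases "p \<le> q")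
    case True
    then have "sqrt p \<le> sqrt q" "sqrt (1-q) \<le> sqrt (1-p)" by auto
    then show ?thesis by (simp add: mult_nonpos_nonpos)
  next
    case False
    then have "sqrt p \<ge> sqrt q" "sqrt (1-q) \<ge> sqrt (1-p)" by auto
    then show ?thesis by simp
  qed
  moreover have "((sqrt p - sqrt (1-p)) - (sqrt q - sqrt (1-q)))^2
     = (sqrt p - sqrt q)^2 + (sqrt (1-p) - sqrt (1-q))^2
       + 2 * ((sqrt p - sqrt q) * (sqrt (1-q) - sqrt (1-p)))"
    by (simp add: power2_eq_square algebra_simps)
  ultimately show "(sqrt p - sqrt q)^2 + (sqrt (1-p) - sqrt (1-q))^2
         \<le> ((sqrt p - sqrt (1-p)) - (sqrt q - sqrt (1-q)))^2" by linarith
qed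



definition Hs :: "(nat \<Rightarrow> real) \<Rightarrow> (nat \<Rightarrow> real) \<Rightarrow> real" where
  "Hs r c = (\<Sum>x\<in>{0,1}. c x * ln (c x / (r x * (c 0 + c 1))))"

lemma mi_Hs:
  fixes P :: "(nat \<times> 'b) pmf"
  assumes "set_pmf P \<subseteq> {0,1} \<times> Y" "finite Y"
  shows "mutual_info P = (\<Sum>y\<in>Y. Hs (pmf (map_pmf fst P)) (\<lambda>x. pmf P (x,y)))"
  unfolding mi_expand[OF assms] Hs_def by simp

lemma loss_eq:
  fixes P :: "(nat \<times> nat) pmf"
  assumes sub: "set_pmf P \<subseteq> {0,1} \<times> {1..n}" and ij: "i \<in> {1..n}" "j \<in> {1..n}" "i \<noteq> j"
  shows "mutual_info P - mutual_info (map_pmf (\<lambda>(x, y). (x, merge_sym i j y)) P)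
     = Hs (pmf (map_pmf fst P)) (\<lambda>x. pmf P (x,i)) + Hs (pmf (map_pmf fst P)) (\<lambda>x. pmf P (x,j))
       - Hs (pmf (map_pmf fst P)) (\<lambda>x. pmf P (x,i) + pmf P (x,j))"
proof -
  define Q where "Q = map_pmf (\<lambda>(x, y). (x, merge_sym i j y)) P"
  define R where "R = {1..n} - {i,j}"
  define S where "S = ({0,1::nat} \<times> {1..n})"
  have finS: "finite S" unfolding S_def by simp
  have fstQ: "map_pmf fst Q = map_pmf fst P"
    unfolding Q_def map_pmf_comp by (simp add: case_prod_beta)
  have subQ: "set_pmf Q \<subseteq> {0,1} \<times> insert 0 R"
  proof
    fix z assume "z \<in> set_pmf Q"
    then obtain w where w: "w \<in> set_pmf P" "z = (\<lambda>(x, y). (x, merge_sym i j y)) w"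
      unfolding Q_def by auto
    obtain x y where xy: "w = (x,y)" by (cases w)
    have "x \<in> {0,1}" "y \<in> {1..n}" using w(1) sub xy by auto
    then show "z \<in> {0,1} \<times> insert 0 R" using w(2) xy unfolding R_def merge_sym_def by auto
  qed
  have Q0: "pmf Q (x,0) = pmf P (x,i) + pmf P (x,j)" if "x \<in> {0,1}" for x
  proof -
    have "pmf Q (x,0) = (\<Sum>w\<in>{w\<in>S. (\<lambda>(x, y). (x, merge_sym i j y)) w = (x,0)}. pmf P w)"
      unfolding Q_def by (rule pmf_map_fin) (use sub finS in \<open>auto simp: S_def\<close>)
    also have "{w\<in>S. (\<lambda>(x, y). (x, merge_sym i j y)) w = (x,0)} = {(x,i),(x,j)}"
      using that ij by (auto simp: S_def merge_sym_def split: if_splits)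
    finally show ?thesis using ij by simp
  qed
  have QR: "pmf Q (x,y) = pmf P (x,y)" if "x \<in> {0,1}" "y \<in> R" for x y
  proof -
    have "pmf Q (x,y) = (\<Sum>w\<in>{w\<in>S. (\<lambda>(x, y). (x, merge_sym i j y)) w = (x,y)}. pmf P w)"
      unfolding Q_def by (rule pmf_map_fin) (use sub finS in \<open>auto simp: S_def\<close>)
    also have "{w\<in>S. (\<lambda>(x, y). (x, merge_sym i j y)) w = (x,y)} = {(x,y)}"
      using that ij by (auto simp: S_def merge_sym_def R_def)
    finally show ?thesis by simp
  qed
  have "mutual_info Q = (\<Sum>y\<in>insert 0 R. Hs (pmf (map_pmf fst P)) (\<lambda>x. pmf Q (x,y)))"
    using mi_Hs[OF subQ] fstQ unfolding R_def by simp
  also have "\<dots> = Hs (pmf (map_pmf fst P)) (\<lambda>x. pmf Q (x,0))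
                 + (\<Sum>y\<in>R. Hs (pmf (map_pmf fst P)) (\<lambda>x. pmf Q (x,y)))"
    by (rule sum.insert) (auto simp: R_def)
  also have "(\<lambda>x. pmf Q (x,0)) = (\<lambda>x. if x \<in> {0,1} then pmf P (x,i) + pmf P (x,j) else pmf Q (x,0))"
    using Q0 by auto
  also have "Hs (pmf (map_pmf fst P)) \<dots> = Hs (pmf (map_pmf fst P)) (\<lambda>x. pmf P (x,i) + pmf P (x,j))"
    unfolding Hs_def by simp
  also have "(\<Sum>y\<in>R. Hs (pmf (map_pmf fst P)) (\<lambda>x. pmf Q (x,y)))
           = (\<Sum>y\<in>R. Hs (pmf (map_pmf fst P)) (\<lambda>x. pmf P (x,y)))"
    by (rule sum.cong) (auto simp: Hs_def QR)
  finally have MQ: "mutual_info Q = Hs (pmf (map_pmf fst P)) (\<lambda>x. pmf P (x,i) + pmf P (x,j))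
      + (\<Sum>y\<in>R. Hs (pmf (map_pmf fst P)) (\<lambda>x. pmf P (x,y)))" .
  have MP: "mutual_info P = Hs (pmf (map_pmf fst P)) (\<lambda>x. pmf P (x,i))
     + Hs (pmf (map_pmf fst P)) (\<lambda>x. pmf P (x,j))
     + (\<Sum>y\<in>R. Hs (pmf (map_pmf fst P)) (\<lambda>x. pmf P (x,y)))"
  proof -
    have "mutual_info P = (\<Sum>y\<in>{1..n}. Hs (pmf (map_pmf fst P)) (\<lambda>x. pmf P (x,y)))"
      by (rule mi_Hs[OF sub]) simp
    also have "{1..n} = insert i (insert j R)" using ij unfolding R_def by auto
    also have "(\<Sum>y\<in>insert i (insert j R). Hs (pmf (map_pmf fst P)) (\<lambda>x. pmf P (x,y)))
       = Hs (pmf (map_pmf fst P)) (\<lambda>x. pmf P (x,i))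
     + Hs (pmf (map_pmf fst P)) (\<lambda>x. pmf P (x,j))
     + (\<Sum>y\<in>R. Hs (pmf (map_pmf fst P)) (\<lambda>x. pmf P (x,y)))"
      using ij by (simp add: R_def add.assoc)
    finally show ?thesis .
  qed
  show ?thesis using MP MQ unfolding Q_def by simp
qed



lemma Hs_eval: "Hs r c = c 0 * ln (c 0 / (r 0 * (c 0 + c 1))) + c 1 * ln (c 1 / (r 1 * (c 0 + c 1)))"
  by (simp add: Hs_def)

lemma split_aux:
  fixes u w :: real
  assumes "u \<ge> 0" "w \<ge> 0"
  shows "w = (u + w) * (if u + w = 0 then 0 else w / (u + w))"
    and "u = (u + w) * (1 - (if u + w = 0 then 0 else w / (u + w)))"
proof -
  show "w = (u + w) * (if u + w = 0 then 0 else w / (u + w))"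
    using assms by auto
  show "u = (u + w) * (1 - (if u + w = 0 then 0 else w / (u + w)))"
  proof (cases "u + w = 0")
    case True then show ?thesis using assms by auto
  next
    case False then show ?thesis by (simp add: field_simps)
  qed
qed

lemma pair_real:
  fixes a b p q :: real and r cA cB :: "nat \<Rightarrow> real"
  assumes "a \<ge> 0" "b \<ge> 0" "0 \<le> p" "p \<le> 1" "0 \<le> q" "q \<le> 1"
    and e: "cA 0 = a*(1-p)" "cA 1 = a*p" "cB 0 = b*(1-q)" "cB 1 = b*q"
    and r: "r 0 \<ge> cA 0 + cB 0" "r 1 \<ge> cA 1 + cB 1"
  shows "Hs r cA + Hs r cB - Hs r (\<lambda>x. cA x + cB x)
    \<le> 2 * max a b * ((sqrt p - sqrt q)^2 + (sqrt (1-p) - sqrt (1-q))^2)"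
proof -
  have sa: "a*(1-p) + a*p = a" "b*(1-q) + b*q = b" "a*(1-p) + b*(1-q) + (a*p + b*q) = a + b"
    by (simp_all add: algebra_simps)
  have c1: "(a*p) * ln ((a*p) / (r 1*a)) + (b*q) * ln ((b*q) / (r 1*b))
         - (a*p + b*q) * ln ((a*p + b*q) / (r 1*(a+b))) \<le> 2 * max a b * (sqrt p - sqrt q)^2"
    by (rule core) (use assms in auto)
  have c0: "(a*(1-p)) * ln ((a*(1-p)) / (r 0*a)) + (b*(1-q)) * ln ((b*(1-q)) / (r 0*b))
         - (a*(1-p) + b*(1-q)) * ln ((a*(1-p) + b*(1-q)) / (r 0*(a+b)))
         \<le> 2 * max a b * (sqrt (1-p) - sqrt (1-q))^2"
    by (rule core) (use assms in auto)
  have "Hs r cA + Hs r cB - Hs r (\<lambda>x. cA x + cB x) =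
     ((a*p) * ln ((a*p) / (r 1*a)) + (b*q) * ln ((b*q) / (r 1*b))
         - (a*p + b*q) * ln ((a*p + b*q) / (r 1*(a+b))))
   + ((a*(1-p)) * ln ((a*(1-p)) / (r 0*a)) + (b*(1-q)) * ln ((b*(1-q)) / (r 0*b))
         - (a*(1-p) + b*(1-q)) * ln ((a*(1-p) + b*(1-q)) / (r 0*(a+b))))"
    unfolding Hs_eval e by (simp only: sa)
  also have "\<dots> \<le> 2 * max a b * ((sqrt p - sqrt q)^2 + (sqrt (1-p) - sqrt (1-q))^2)"
    using c0 c1 by (simp add: distrib_left)
  finally show ?thesis .
qed

lemma loss_bound:
  fixes P :: "(nat \<times> nat) pmf"
  assumes sub: "set_pmf P \<subseteq> {0,1} \<times> {1..n}" and ij: "i \<in> {1..n}" "j \<in> {1..n}" "i \<noteq> j"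
  defines "pp \<equiv> \<lambda>y. pmf P (0,y) + pmf P (1,y)"
  defines "sv \<equiv> \<lambda>y. if pp y = 0 then 0 else pmf P (1,y) / pp y"
  shows "mutual_info P - mutual_info (map_pmf (\<lambda>(x, y). (x, merge_sym i j y)) P)
    \<le> 2 * max (pp i) (pp j) * ((sqrt (sv i) - sqrt (sv j))^2 + (sqrt (1 - sv i) - sqrt (1 - sv j))^2)"
proof -
  have svb: "0 \<le> sv y" "sv y \<le> 1" "pmf P (1,y) = pp y * sv y" "pmf P (0,y) = pp y * (1 - sv y)"
    "pp y \<ge> 0" for y
  proof -
    have nn: "pmf P (0,y) \<ge> 0" "pmf P (1,y) \<ge> 0" by simp_all
    show "0 \<le> sv y" "pp y \<ge> 0" unfolding sv_def pp_def by auto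
    show "sv y \<le> 1"
    proof (cases "pp y = 0")
      case False
      then have "pp y > 0" using nn unfolding pp_def by linarith
      moreover have "pmf P (1,y) \<le> pp y" using nn unfolding pp_def by linarith
      ultimately show ?thesis using False unfolding sv_def by simp
    qed (simp add: sv_def)
    show "pmf P (1,y) = pp y * sv y" "pmf P (0,y) = pp y * (1 - sv y)"
      unfolding sv_def pp_def using split_aux[OF nn] by simp_all
  qed
  define S where "S = ({0,1::nat} \<times> {1..n})"
  have rb: "pmf (map_pmf fst P) x \<ge> pmf P (x,i) + pmf P (x,j)" if "x \<in> {0,1}" for x
  proof -
    have "pmf (map_pmf fst P) x = (\<Sum>w\<in>{w\<in>S. fst w = x}. pmf P w)"
      by (rule pmf_map_fin) (use sub in \<open>auto simp: S_def\<close>)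
    also have "\<dots> \<ge> (\<Sum>w\<in>{(x,i),(x,j)}. pmf P w)"
      by (rule sum_mono2) (use that ij in \<open>auto simp: S_def\<close>)
    finally show ?thesis using ij by simp
  qed
  have r0: "pmf P (0,i) + pmf P (0,j) \<le> pmf (map_pmf fst P) 0" using rb by simp
  have r1: "pmf P (1,i) + pmf P (1,j) \<le> pmf (map_pmf fst P) 1" using rb by simp
  show ?thesis unfolding loss_eq[OF sub ij]
    by (rule pair_real) (use svb r0 r1 in auto)
qed



lemma pigeon:
  fixes g :: "nat \<Rightarrow> real" and T :: "nat set"
  assumes fin: "finite T" and m: "card T \<ge> 2" and gb: "\<And>y. y \<in> T \<Longrightarrow> -1 \<le> g y \<and> g y \<le> 1"
  shows "\<exists>i\<in>T. \<exists>j\<in>T. i \<noteq> j \<and> \<bar>g i - g j\<bar> \<le> 2 / (real (card T) - 1)"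
proof -
  define m where "m = card T"
  define v where "v y = (g y + 1) * (real m - 1) / 2" for y
  define k where "k y = min (m - 2) (nat \<lfloor>v y\<rfloor>)" for y
  have m1: "real m - 1 > 0" using m unfolding m_def by simp
  have vb: "0 \<le> v y \<and> v y \<le> real m - 1" if "y \<in> T" for y
  proof -
    have "0 \<le> g y + 1" "g y + 1 \<le> 2" using gb[OF that] by auto
    moreover have "(g y + 1) * (real m - 1) \<le> 2 * (real m - 1)"
      by (rule mult_right_mono) (use \<open>g y + 1 \<le> 2\<close> m1 in auto)
    ultimately show ?thesis unfolding v_def using m1 by (auto simp: mult.commute)
  qed
  have kv: "real (k y) \<le> v y \<and> v y \<le> real (k y) + 1" if "y \<in> T" for y
  proof (cases "nat \<lfloor>v y\<rfloor> \<le> m - 2")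
    case True
    then have "k y = nat \<lfloor>v y\<rfloor>" unfolding k_def by simp
    moreover have "real (nat \<lfloor>v y\<rfloor>) = of_int \<lfloor>v y\<rfloor>" using vb[OF that] by simp
    ultimately show ?thesis by linarith
  next
    case False
    then have "k y = m - 2" unfolding k_def by simp
    moreover have "real (m - 2) = real m - 2" using m unfolding m_def by simp
    moreover have "of_int \<lfloor>v y\<rfloor> \<ge> real m - 1"
    proof -
      have "nat \<lfloor>v y\<rfloor> \<ge> m - 1" using False by simp
      then have "\<lfloor>v y\<rfloor> \<ge> int m - 1" using m unfolding m_def by linarith
      then show ?thesis by linarith
    qed
    ultimately show ?thesis using vb[OF that] by linarith
  qed
  have "k ` T \<subseteq> {0..m-2}" unfolding k_def by auto
  then have "card (k ` T) \<le> m - 1" using card_mono[of "{0..m-2}" "k ` T"] m unfolding m_def by simp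
  then have "card (k ` T) < card T" using m unfolding m_def by simp
  then have "\<not> inj_on k T" using card_image by fastforce
  then obtain i j where ij: "i \<in> T" "j \<in> T" "i \<noteq> j" "k i = k j" unfolding inj_on_def by blast
  have "\<bar>v i - v j\<bar> \<le> 1" using kv[OF ij(1)] kv[OF ij(2)] ij(4) by linarith
  moreover have "v i - v j = (g i - g j) * (real m - 1) / 2" unfolding v_def by (simp add: field_simps)
  ultimately have "\<bar>g i - g j\<bar> * (real m - 1) \<le> 2" using m1 by (simp add: abs_mult)
  then have "\<bar>g i - g j\<bar> \<le> 2 / (real m - 1)" using m1 by (simp add: le_divide_eq)
  then show ?thesis using ij unfolding m_def by blast
qed



theorem theorem5:
  fixes P :: "(nat \<times> nat) pmf" and n :: nat
  assumes "n \<ge> 2"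
    and "set_pmf P \<subseteq> {0, 1} \<times> {1..n}"
  shows "\<exists>i\<in>{1..n}. \<exists>j\<in>{1..n}. i \<noteq> j \<and>
           mutual_info P - mutual_info (map_pmf (\<lambda>(x, y). (x, merge_sym i j y)) P)
             \<le> 128 / real n ^ 3"
proof -
  note sub = assms(2)
  define pp where "pp = (\<lambda>y. pmf P (0,y) + pmf P (1,y))"
  define sv where "sv = (\<lambda>y. if pp y = 0 then 0 else pmf P (1,y) / pp y)"
  define g where "g = (\<lambda>y. sqrt (sv y) - sqrt (1 - sv y))"
  define L where "L = (\<lambda>i j. mutual_info P - mutual_info (map_pmf (\<lambda>(x, y). (x, merge_sym i j y)) P))"
  define Di where "Di = (\<lambda>i j. (sqrt (sv i) - sqrt (sv j))^2 + (sqrt (1 - sv i) - sqrt (1 - sv j))^2)"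
  have ppnn: "pp y \<ge> 0" for y unfolding pp_def by simp
  have svb: "0 \<le> sv y \<and> sv y \<le> 1" for y
  proof -
    have nn: "pmf P (0,y) \<ge> 0" "pmf P (1,y) \<ge> 0" by simp_all
    show ?thesis
    proof (cases "pp y = 0")
      case False
      then have "pp y > 0" using nn unfolding pp_def by linarith
      moreover have "pmf P (1,y) \<le> pp y" using nn unfolding pp_def by linarith
      ultimately show ?thesis using False unfolding sv_def by simp
    qed (simp add: sv_def)
  qed
  have N: "real n \<ge> 2" using assms(1) by simp
  have sum1: "(\<Sum>y\<in>{1..n}. pp y) = 1"
  proof -
    have "1 = (\<Sum>w\<in>{0,1::nat} \<times> {1..n}. pmf P w)"
      by (rule sum_pmf_eq_1[symmetric]) (use sub in auto)
    also have "\<dots> = (\<Sum>x\<in>{0,1::nat}. \<Sum>y\<in>{1..n}. pmf P (x,y))"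
      by (subst sum.cartesian_product) (simp add: case_prod_beta)
    also have "\<dots> = (\<Sum>y\<in>{1..n}. pp y)"
      unfolding pp_def by (simp add: sum.distrib)
    finally show ?thesis by simp
  qed
  define T where "T = {y\<in>{1..n}. pp y \<le> 2 / real n}"
  define U where "U = {y\<in>{1..n}. \<not> pp y \<le> 2 / real n}"
  have cTU: "card T + card U = n"
  proof -
    have "card (T \<union> U) = card T + card U"
      by (rule card_Un_disjoint) (auto simp: T_def U_def)
    moreover have "T \<union> U = {1..n}" unfolding T_def U_def by auto
    ultimately show ?thesis by simp
  qed
  have cU: "2 * card U < n"
  proof (cases "U = {}")
    case True then show ?thesis using assms(1) by simp
  next
    case False
    have fU: "finite U" unfolding U_def by simp
    have "(\<Sum>y\<in>U. 2 / real n) < (\<Sum>y\<in>U. pp y)"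
      by (rule sum_strict_mono) (use fU False in \<open>auto simp: U_def\<close>)
    also have "\<dots> \<le> (\<Sum>y\<in>{1..n}. pp y)"
      by (rule sum_mono2) (auto simp: U_def ppnn)
    finally have "real (card U) * (2 / real n) < 1" using sum1 by simp
    then have "real (card U) * 2 < real n" using N by (simp add: field_simps)
    then show ?thesis by linarith
  qed
  have cT: "n < 2 * card T" using cTU cU by linarith
  have finT: "finite T" unfolding T_def by simp
  have TS: "T \<subseteq> {1..n}" unfolding T_def by auto
  have key: "L i j \<le> (4 / real n) * Di i j" if "i \<in> T" "j \<in> T" "i \<noteq> j" for i j
  proof -
    have ij: "i \<in> {1..n}" "j \<in> {1..n}" using that TS by auto
    have "L i j \<le> 2 * max (pp i) (pp j) * Di i j"
      unfolding L_def Di_def pp_def sv_def by (rule loss_bound[OF sub ij that(3)])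
    also have "\<dots> \<le> 2 * (2 / real n) * Di i j"
    proof (rule mult_right_mono)
      show "2 * max (pp i) (pp j) \<le> 2 * (2 / real n)" using that unfolding T_def by auto
      show "0 \<le> Di i j" unfolding Di_def by simp
    qed
    finally show ?thesis by simp
  qed
  have Db: "Di i j \<le> 2" "Di i j \<le> (g i - g j)^2" for i j
    unfolding Di_def g_def using dist_bound[of "sv i" "sv j"] svb[of i] svb[of j] by auto
  show ?thesis
  proof (cases "n \<le> 4")
    case True
    have "card T \<ge> 2" using cT assms(1) by linarith
    then obtain i j where ij: "i \<in> T" "j \<in> T" "i \<noteq> j"
      by (metis One_nat_def card_le_Suc0_iff_eq finT not_less_eq_eq numeral_2_eq_2)
    have "L i j \<le> (4 / real n) * 2"
    proof -
      have "(4 / real n) * Di i j \<le> (4 / real n) * 2"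
        by (rule mult_left_mono) (use Db N in auto)
      then show ?thesis using key[OF ij] by linarith
    qed
    also have "(4 / real n) * 2 \<le> 128 / real n ^ 3"
    proof -
      have "n = 2 \<or> n = 3 \<or> n = 4" using True assms(1) by auto
      then show ?thesis by auto
    qed
    finally show ?thesis using ij TS unfolding L_def by blast
  next
    case False
    define m where "m = card T"
    have m3: "card T \<ge> 2" using cT False by linarith
    have gb: "-1 \<le> g y \<and> g y \<le> 1" for y
    proof -
      have "sqrt (sv y) \<le> 1" "sqrt (1 - sv y) \<le> 1" "0 \<le> sqrt (sv y)" "0 \<le> sqrt (1 - sv y)"
        using svb[of y] by auto
      then show ?thesis unfolding g_def by linarith
    qed
    obtain i j where ij: "i \<in> T" "j \<in> T" "i \<noteq> j" and gij: "\<bar>g i - g j\<bar> \<le> 2 / (real (card T) - 1)"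
      using pigeon[OF finT m3, of g] gb by blast
    define M where "M = real (card T) - 1"
    define R where "R = real n"
    have M0: "M > 0" using m3 unfolding M_def by simp
    have R5: "R \<ge> 5" using False unfolding R_def by simp
    have "n + 1 \<le> 2 * card T" using cT by linarith
    then have "real (n + 1) \<le> real (2 * card T)" by (simp only: of_nat_le_iff)
    then have "real n + 1 \<le> 2 * real (card T)" by simp
    then have MR: "2 * M \<ge> R - 1" unfolding M_def R_def by (simp add: algebra_simps)
    have "(g i - g j)^2 \<le> (2 / M)^2"
    proof -
      have "\<bar>g i - g j\<bar>^2 \<le> (2 / M)^2"
        by (rule power_mono) (use gij M_def in auto)
      then show ?thesis by simp
    qed
    then have "(4 / R) * Di i j \<le> (4 / R) * (2 / M)^2"
      using Db[of i j] R5 by (intro mult_left_mono) auto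
    then have "L i j \<le> (4 / R) * (2 / M)^2"
      using key[OF ij] unfolding R_def by linarith
    also have "(4 / R) * (2 / M)^2 \<le> 128 / R ^ 3"
    proof -
      have "(R - 1)^2 \<le> (2 * M)^2" by (rule power_mono) (use MR R5 in auto)
      moreover have "R^2 \<le> 2 * (R - 1)^2"
      proof -
        have "R*(R-4) \<ge> 0" using R5 by simp
        moreover have "2*(R-1)^2 - R^2 = R*(R-4) + 2" by (simp add: power2_eq_square algebra_simps)
        ultimately show ?thesis by linarith
      qed
      ultimately have p: "R^2 \<le> 8 * M^2" by (simp add: power_mult_distrib)
      have "(4 / R) * (2 / M)^2 = 128 / (R * (8 * M^2))" by (simp add: power_divide)
      also have "\<dots> \<le> 128 / (R * R^2)"
      proof (rule divide_left_mono)
        show "R * R^2 \<le> R * (8 * M^2)" by (rule mult_left_mono) (use p R5 in auto)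
        show "0 < R * (8 * M^2) * (R * R^2)" using R5 M0 by simp
      qed simp
      also have "R * R^2 = R^3" by (simp add: power3_eq_cube power2_eq_square)
      finally show ?thesis .
    qed
    finally show ?thesis using ij TS unfolding L_def R_def by blast
  qed
qed

end
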